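(* Let $(a,b,c,\lambda,\delta)\in(\mathbb F^\times)^4\times\mathbb F$. If the $\triangle_q$-module $W_\lambda^\delta(a,b,c)$ is irreducible, then $\delta\ne0$ or $\lambda^2\notin\{q^{2i}: i=0,1,\dots,d'-2\}$.
   Context: $\mathbb F$ is an algebraically closed field and $q\in\mathbb F^\times$ a root of unity of order $d\notin\{1,2,4\}$; $d'=d$ if $d$ odd, $d'=d/2$ if $d$ even. $\triangle_q$ is the unital associative $\mathbb F$-algebra with generators $A,B,C$ subject to: each of $A+\frac{qBC-q^{-1}CB}{q^2-q^{-2}}$, $B+\frac{qCA-q^{-1}AC}{q^2-q^{-2}}$, $C+\frac{qAB-q^{-1}BA}{q^2-q^{-2}}$ is central; $\alpha,\beta,\gamma$ are these times $q+q^{-1}$. For $(a,b,c,\lambda)\in(\mathbb F^\times)^4$, $i\in\mathbb N$: $\theta_i=a\lambda^{-1}q^{2i}+a^{-1}\lambda q^{-2i}$, $\theta_i^*=b\lambda^{-1}q^{2i}+b^{-1}\lambda q^{-2i}$, $\varphi_i=a^{-1}b^{-1}\lambda q(q^i-q^{-i})(\lambda^{-1}q^{i-1}-\lambda q^{1-i})(q^{-i}-abc\lambda^{-1}q^{i-1})(q^{-i}-abc^{-1}\lambda^{-1}q^{i-1})$. $M_\lambda(a,b,c)$ has basis $\{m_i\}_{i\in\mathbb N}$, $(A-\theta_i)m_i=m_{i+1}$, $(B-\theta_i^* )m_i=\varphi_im_{i-1}$, $\alpha,\beta,\gamma$ acting as $(b+b^{-1})(c+c^{-1})+(a+a^{-1})(\lambda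 q+\lambda^{-1}q^{-1})$, $(c+c^{-1})(a+a^{-1})+(b+b^{-1})(\lambda q+\lambda^{-1}q^{-1})$, $(a+a^{-1})(b+b^{-1})+(c+c^{-1})(\lambda q+\lambda^{-1}q^{-1})$. $W_\lambda^\delta(a,b,c)$ is the quotient of $M_\lambda(a,b,c)$ by the span of $\{\delta m_i-m_{d'+i}\}_{i\in\mathbb N}$. *)

theory Defs
  imports "HOL-Computational_Algebra.Polynomial" "HOL-Library.Function_Algebras"
begin

definition alg_closed :: "'a::field itself \<Rightarrow> bool" where
  "alg_closed _ \<longleftrightarrow> (\<forall>p::'a poly. degree p > 0 \<longrightarrow> (\<exists>x. poly p x = 0))"

definition root_of_unity_order :: "'a::field \<Rightarrow> nat \<Rightarrow> bool" where
  "root_of_unity_order q d \<longleftrightarrow> d > 0 \<and> q ^ d = 1 \<and> (\<forall>k. 0 < k \<and> k < d \<longrightarrow> q ^ k \<noteq> 1)"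

definition dprime :: "nat \<Rightarrow> nat" where
  "dprime d = (if odd d then d else d div 2)"

definition theta :: "'a::field \<Rightarrow> 'a \<Rightarrow> 'a \<Rightarrow> nat \<Rightarrow> 'a" where
  "theta q a lam i = a * inverse lam * q powi (2 * int i) + inverse a * lam * q powi (- 2 * int i)"

definition thetas :: "'a::field \<Rightarrow> 'a \<Rightarrow> 'a \<Rightarrow> nat \<Rightarrow> 'a" where
  "thetas q b lam i = b * inverse lam * q powi (2 * int i) + inverse b * lam * q powi (- 2 * int i)"

definition phi :: "'a::field \<Rightarrow> 'a \<Rightarrow> 'a \<Rightarrow> 'a \<Rightarrow> 'a \<Rightarrow> nat \<Rightarrow> 'a" where
  "phi q a b c lam i = inverse a * inverse b * lam * q
     * (q powi int i - q powi (- int i))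
     * (inverse lam * q powi (int i - 1) - lam * q powi (1 - int i))
     * (q powi (- int i) - a * b * c * inverse lam * q powi (int i - 1))
     * (q powi (- int i) - a * b * inverse c * inverse lam * q powi (int i - 1))"

text \<open>The module M_lambda(a,b,c): finitely supported coefficient sequences
  v = sum_i v(i) m_i.\<close>
definition Mspace :: "(nat \<Rightarrow> 'a::field) set" where
  "Mspace = {v. finite {i. v i \<noteq> 0}}"

definition sc :: "'a::field \<Rightarrow> (nat \<Rightarrow> 'a) \<Rightarrow> (nat \<Rightarrow> 'a)" where
  "sc c v = (\<lambda>i. c * v i)"

definition mbas :: "nat \<Rightarrow> nat \<Rightarrow> 'a::field" where
  "mbas i = (\<lambda>j. if j = i then 1 else 0)"

text \<open>(A - theta_i) m_i = m_{i+1}\<close>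
definition opA :: "'a::field \<Rightarrow> 'a \<Rightarrow> 'a \<Rightarrow> (nat \<Rightarrow> 'a) \<Rightarrow> (nat \<Rightarrow> 'a)" where
  "opA q a lam v = (\<lambda>j. theta q a lam j * v j + (if j = 0 then 0 else v (j - 1)))"

text \<open>(B - theta*_i) m_i = phi_i m_{i-1}  (phi_0 = 0)\<close>
definition opB :: "'a::field \<Rightarrow> 'a \<Rightarrow> 'a \<Rightarrow> 'a \<Rightarrow> 'a \<Rightarrow> (nat \<Rightarrow> 'a) \<Rightarrow> (nat \<Rightarrow> 'a)" where
  "opB q a b c lam v = (\<lambda>j. thetas q b lam j * v j + phi q a b c lam (Suc j) * v (Suc j))"

definition gammaval :: "'a::field \<Rightarrow> 'a \<Rightarrow> 'a \<Rightarrow> 'a \<Rightarrow> 'a \<Rightarrow> 'a" where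
  "gammaval q a b c lam = (a + inverse a) * (b + inverse b) + (c + inverse c) * (lam * q + inverse lam * inverse q)"

text \<open>C is determined by the relation: C + (qAB - q^{-1}BA)/(q^2-q^{-2}) is central and
  acts as gamma/(q+q^{-1}).\<close>
definition opC :: "'a::field \<Rightarrow> 'a \<Rightarrow> 'a \<Rightarrow> 'a \<Rightarrow> 'a \<Rightarrow> (nat \<Rightarrow> 'a) \<Rightarrow> (nat \<Rightarrow> 'a)" where
  "opC q a b c lam v = (\<lambda>j. gammaval q a b c lam / (q + inverse q) * v j
     - (q * opA q a lam (opB q a b c lam v) j - inverse q * opB q a b c lam (opA q a lam v) j)
       / (q ^ 2 - inverse q ^ 2))"

text \<open>Triangle_q-submodules of M_lambda(a,b,c) (the central elements alpha, beta, gamma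
  act as scalars, so invariance under A, B, C suffices).\<close>
definition is_submodule :: "'a::field \<Rightarrow> 'a \<Rightarrow> 'a \<Rightarrow> 'a \<Rightarrow> 'a \<Rightarrow> (nat \<Rightarrow> 'a) set \<Rightarrow> bool" where
  "is_submodule q a b c lam U \<longleftrightarrow> U \<subseteq> Mspace \<and> module.subspace sc U \<and>
     (\<forall>v\<in>U. opA q a lam v \<in> U \<and> opB q a b c lam v \<in> U \<and> opC q a b c lam v \<in> U)"

definition Nsub :: "nat \<Rightarrow> 'a::field \<Rightarrow> (nat \<Rightarrow> 'a) set" where
  "Nsub d' \<delta> = module.span sc {(\<lambda>j. \<delta> * mbas i j - mbas (d' + i) j) | i. True}"

text \<open>W = M / N is irreducible: it is nonzero and, by the correspondence theorem, its
  submodules correspond to the submodules of M containing N.\<close>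
definition W_irreducible :: "'a::field \<Rightarrow> nat \<Rightarrow> 'a \<Rightarrow> 'a \<Rightarrow> 'a \<Rightarrow> 'a \<Rightarrow> 'a \<Rightarrow> bool" where
  "W_irreducible q d' a b c lam \<delta> \<longleftrightarrow>
     Nsub d' \<delta> \<noteq> Mspace \<and>
     (\<forall>U. is_submodule q a b c lam U \<and> Nsub d' \<delta> \<subseteq> U \<longrightarrow> U = Nsub d' \<delta> \<or> U = Mspace)"

end

theory Submission
  imports Defs
begin

lemma module_sc: "module (sc :: 'a::field \<Rightarrow> (nat \<Rightarrow> 'a) \<Rightarrow> _)"
  by unfold_locales (auto simp: sc_def fun_eq_iff algebra_simps)

lemma fin_supp_mono:
  assumes "finite {j. v j \<noteq> (0::'a::field)}" "finite {j. w j \<noteq> (0::'a)}"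
    and "\<And>j. f j \<noteq> 0 \<Longrightarrow> v j \<noteq> 0 \<or> w j \<noteq> 0"
  shows "finite {j. f j \<noteq> 0}"
proof -
  have "{j. f j \<noteq> 0} \<subseteq> {j. v j \<noteq> 0} \<union> {j. w j \<noteq> 0}" using assms(3) by auto
  thus ?thesis using assms(1,2) finite_subset by blast
qed

lemma opA_M: "v \<in> Mspace \<Longrightarrow> opA q a lam v \<in> Mspace"
proof -
  assume v: "v \<in> Mspace"
  let ?S = "{j. v j \<noteq> 0}"
  have "{j. opA q a lam v j \<noteq> 0} \<subseteq> ?S \<union> Suc ` ?S"
  proof
    fix j assume "j \<in> {j. opA q a lam v j \<noteq> 0}"
    hence "v j \<noteq> 0 \<or> (j \<noteq> 0 \<and> v (j - 1) \<noteq> 0)" by (auto simp: opA_def split: if_splits)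
    thus "j \<in> ?S \<union> Suc ` ?S"
      by (cases j) auto
  qed
  thus ?thesis using v by (auto simp: Mspace_def intro: finite_subset)
qed

lemma opB_M: "v \<in> Mspace \<Longrightarrow> opB q a b c lam v \<in> Mspace"
proof -
  assume v: "v \<in> Mspace"
  let ?S = "{j. v j \<noteq> 0}"
  have "{j. opB q a b c lam v j \<noteq> 0} \<subseteq> ?S \<union> (\<lambda>j. j - 1) ` ?S"
  proof
    fix j assume "j \<in> {j. opB q a b c lam v j \<noteq> 0}"
    hence "v j \<noteq> 0 \<or> v (Suc j) \<noteq> 0" by (auto simp: opB_def)
    thus "j \<in> ?S \<union> (\<lambda>j. j - 1) ` ?S"
      by (metis (mono_tags, lifting) UnI1 UnI2 diff_Suc_1 image_eqI mem_Collect_eq)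
  qed
  thus ?thesis using v by (auto simp: Mspace_def intro: finite_subset)
qed

lemma opC_M: "v \<in> Mspace \<Longrightarrow> opC q a b c lam v \<in> Mspace"
proof -
  assume v: "v \<in> Mspace"
  have 1: "opA q a lam (opB q a b c lam v) \<in> Mspace" using v opA_M opB_M by blast
  have 2: "opB q a b c lam (opA q a lam v) \<in> Mspace" using v opA_M opB_M by blast
  have "{j. opC q a b c lam v j \<noteq> 0} \<subseteq> {j. v j \<noteq> 0} \<union> {j. opA q a lam (opB q a b c lam v) j \<noteq> 0}
     \<union> {j. opB q a b c lam (opA q a lam v) j \<noteq> 0}"
    by (auto simp: opC_def)
  thus ?thesis using v 1 2 by (auto simp: Mspace_def intro: finite_subset)
qed

theorem lemma8p1:
  fixes q a b c lam \<delta> :: "'F::field" and d :: nat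
  assumes "alg_closed TYPE('F)"
    and "root_of_unity_order q d" and "d \<notin> {1, 2, 4}"
    and "a \<noteq> 0" and "b \<noteq> 0" and "c \<noteq> 0" and "lam \<noteq> 0"
    and "W_irreducible q (dprime d) a b c lam \<delta>"
  shows "\<delta> \<noteq> 0 \<or> lam ^ 2 \<notin> {q ^ (2 * i) | i. i \<le> dprime d - 2}"
proof (rule ccontr)
  assume "\<not> ?thesis"
  then obtain i where d0: "\<delta> = 0" and li: "lam ^ 2 = q ^ (2 * i)" and il: "i \<le> dprime d - 2"
    by auto
  interpret m: module "sc :: 'F \<Rightarrow> (nat \<Rightarrow> 'F) \<Rightarrow> _" by (rule module_sc)
  let ?d' = "dprime d"
  have dpos: "d > 0" and qd: "q ^ d = 1" using assms(2) by (auto simp: root_of_unity_order_def)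
  have q0: "q \<noteq> 0" using qd dpos by (metis power_0_left less_not_refl2 zero_neq_one)
  have d3: "?d' \<ge> 3"
  proof (cases "odd d")
    case True
    then have "d \<noteq> 1" using assms(3) by auto
    with True dpos have "d \<ge> 3" by presburger
    thus ?thesis using True by (simp add: dprime_def)
  next
    case False
    then have "d \<noteq> 2" "d \<noteq> 4" using assms(3) by auto
    with False dpos have "d \<ge> 6" by presburger
    thus ?thesis using False by (simp add: dprime_def)
  qed
  have ilt: "Suc i < ?d'" using il d3 by linarith
  have phi0: "phi q a b c lam (Suc i) = 0"
  proof -
    have e1: "q powi (int (Suc i) - 1) = q ^ i" by simp
    have e2: "q powi (1 - int (Suc i)) = inverse (q ^ i)"
      by (simp add: power_int_minus)
    have "inverse lam * q ^ i - lam * inverse (q ^ i) = 0"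
    proof -
      have qq: "q ^ (2 * i) = q ^ i * q ^ i" by (simp add: mult_2 power_add)
      have "lam * lam = q ^ i * q ^ i" using li unfolding qq by (simp add: power2_eq_square)
      hence "inverse lam * q ^ i = lam * inverse (q ^ i)" using q0 assms(7)
        by (simp add: field_simps)
      thus ?thesis by simp
    qed
    thus ?thesis unfolding phi_def e1 e2 by simp
  qed
  define U where "U = {v \<in> Mspace. \<forall>j\<le>i. v j = (0::'F)}"
  have UA: "opA q a lam v \<in> U" if "v \<in> U" for v
    using that opA_M[of v q a lam] by (auto simp: U_def opA_def)
  have UB: "opB q a b c lam v \<in> U" if "v \<in> U" for v
  proof -
    have "opB q a b c lam v j = 0" if "j \<le> i" "v \<in> U" for j
    proof (cases "j = i")
      case True thus ?thesis using that phi0 by (auto simp: U_def opB_def)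
    next
      case False thus ?thesis using that by (auto simp: U_def opB_def)
    qed
    thus ?thesis using that opB_M[of v q a b c lam] by (auto simp: U_def)
  qed
  have UC: "opC q a b c lam v \<in> U" if "v \<in> U" for v
  proof -
    have 1: "opA q a lam (opB q a b c lam v) \<in> U" using UA UB that by blast
    have 2: "opB q a b c lam (opA q a lam v) \<in> U" using UA UB that by blast
    show ?thesis using that 1 2 opC_M[of v q a b c lam] by (auto simp: U_def opC_def)
  qed
  have Usub: "m.subspace U"
  proof (rule m.subspaceI)
    show "0 \<in> U" by (simp add: U_def Mspace_def)
  next
    fix x y assume "x \<in> U" "y \<in> U"
    hence "finite {j. x j \<noteq> 0}" "finite {j. y j \<noteq> 0}" and xz: "\<forall>j\<le>i. x j = 0" and yz: "\<forall>j\<le>i. y j = 0"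
      by (auto simp: U_def Mspace_def)
    moreover have "(x + y) j \<noteq> 0 \<Longrightarrow> x j \<noteq> 0 \<or> y j \<noteq> 0" for j by auto
    ultimately have "finite {j. (x + y) j \<noteq> 0}" using fin_supp_mono[of x y "x + y"] by blast
    thus "x + y \<in> U" using xz yz by (simp add: U_def Mspace_def)
  next
    fix k x assume "x \<in> U"
    hence f: "finite {j. x j \<noteq> 0}" and xz: "\<forall>j\<le>i. x j = 0" by (auto simp: U_def Mspace_def)
    have "{j. sc k x j \<noteq> 0} \<subseteq> {j. x j \<noteq> 0}" by (auto simp: sc_def)
    hence "finite {j. sc k x j \<noteq> 0}" using f finite_subset by blast
    thus "sc k x \<in> U" using xz by (simp add: U_def Mspace_def sc_def)
  qed
  have Usm: "is_submodule q a b c lam U"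
    unfolding is_submodule_def using Usub UA UB UC by (auto simp: U_def)
  let ?G = "{(\<lambda>j. \<delta> * mbas k j - mbas (?d' + k) j) | k. True} :: (nat \<Rightarrow> 'F) set"
  have GU: "?G \<subseteq> U"
  proof
    fix g assume "g \<in> ?G"
    then obtain k where g: "g = (\<lambda>j. \<delta> * mbas k j - mbas (?d' + k) j)" by auto
    have "{j. g j \<noteq> 0} \<subseteq> {?d' + k}" using d0 by (auto simp: g mbas_def)
    hence "g \<in> Mspace" by (auto simp: Mspace_def intro: finite_subset)
    moreover have "\<forall>j\<le>i. g j = 0" using d0 ilt by (auto simp: g mbas_def)
    ultimately show "g \<in> U" by (simp add: U_def)
  qed
  define V where "V = {v. \<forall>j<?d'. v j = (0::'F)}"
  have GV: "?G \<subseteq> V" using d0 by (auto simp: V_def mbas_def)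
  have Vsub: "m.subspace V" by (auto simp: m.subspace_def V_def sc_def)
  have NU: "Nsub ?d' \<delta> \<subseteq> U" unfolding Nsub_def by (rule m.span_minimal[OF GU Usub])
  have NV: "Nsub ?d' \<delta> \<subseteq> V" unfolding Nsub_def by (rule m.span_minimal[OF GV Vsub])
  have mM: "(mbas k :: nat \<Rightarrow> 'F) \<in> Mspace" for k :: nat
  proof -
    have "{j. (mbas k :: nat \<Rightarrow> 'F) j \<noteq> 0} \<subseteq> {k}" by (auto simp: mbas_def)
    hence "finite {j. (mbas k :: nat \<Rightarrow> 'F) j \<noteq> 0}" using finite_subset by blast
    thus ?thesis by (simp add: Mspace_def)
  qed
  have "mbas (Suc i) \<in> U" using mM by (auto simp: U_def mbas_def)
  moreover have "(mbas (Suc i) :: nat \<Rightarrow> 'F) \<notin> V" using ilt by (auto simp: V_def mbas_def)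
  ultimately have "U \<noteq> Nsub ?d' \<delta>" using NV by blast
  moreover have "(mbas 0 :: nat \<Rightarrow> 'F) \<notin> U" by (auto simp: U_def mbas_def)
  hence "U \<noteq> Mspace" using mM by blast
  ultimately show False using assms(8) Usm NU unfolding W_irreducible_def by blast
qed

end
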